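(* Let $N\ge0$ be an integer, $p,q\ge0$ integers, and $a,b,a_1,\ldots,a_p,b_1,\ldots,b_q,z$ complex numbers with $z\ne0$ such that all denominators below are nonzero. Then \[ {}_{p+1}F_{q+1}^{[N]}\left(\begin{matrix}a,a_1,\ldots,a_p\\ b,b_1,\ldots,b_q\end{matrix};z\right) =\frac{(a)_{N} (b-a)_{N}}{(b)_{N}\, N!} \sum_{n=0}^{N}\frac{(1+n)_{N-n}}{(a+n)_{N-n}}\,\frac{(1+N-n)_{n}}{(b-a+N-n)_{n}}\, {}_{p}F_{q}^{[n]}\left(\begin{matrix}a_1,\ldots,a_p\\ b_1,\ldots,b_q\end{matrix};\frac{n}{N}z\right). \] (For $n=0$ the term ${}_{p}F_{q}^{[0]}$ equals $1$.)
   Context: $(x)_m=x(x+1)\cdots(x+m-1)$ is the rising factorial, $(x)_0=1$. The truncated generalized hypergeometric function is \[ {}_{p}F_{q}^{[N]}\left(\begin{matrix}a_1,\ldots,a_p\\ b_1,\ldots,b_q\end{matrix};z\right)=\sum_{m=0}^{N}\frac{(a_1)_m\cdots(a_p)_m}{(b_1)_m\cdots(b_q)_m\, m!}\,\frac{(N+1-m)_m}{(Nz^{-1}-m)_m}. \] *)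

theory Defs
  imports Complex_Main
begin

definition trunc_hyp :: "complex list \<Rightarrow> complex list \<Rightarrow> nat \<Rightarrow> complex \<Rightarrow> complex" where
  "trunc_hyp as bs N z =
     (\<Sum>m=0..N. (\<Prod>a\<leftarrow>as. pochhammer a m) / ((\<Prod>b\<leftarrow>bs. pochhammer b m) * fact m)
        * (pochhammer (of_nat N + 1 - of_nat m) m
           / pochhammer (of_nat N * inverse z - of_nat m) m))"

end

theory Submission
  imports Defs
begin


lemma poch_nat:
  assumes "m \<le> n"
  shows "pochhammer (of_nat n + 1 - of_nat m :: complex) m = fact n / fact (n - m)"
proof -
  have "(fact n :: complex) = pochhammer 1 ((n - m) + m)" using assms by (simp add: pochhammer_fact)
  also have "\<dots> = pochhammer 1 (n - m) * pochhammer (1 + of_nat (n - m)) m"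
    by (rule pochhammer_product')
  also have "(1 + of_nat (n - m) :: complex) = of_nat n + 1 - of_nat m"
    using assms by (simp add: of_nat_diff)
  finally have "(fact n :: complex) = fact (n - m) * pochhammer (of_nat n + 1 - of_nat m) m"
    by (simp add: pochhammer_fact)
  then show ?thesis by (simp add: field_simps)
qed

lemma poch_zero:
  assumes "n < m"
  shows "pochhammer (of_nat n + 1 - of_nat m :: complex) m = 0"
proof -
  have "(of_nat n + 1 - of_nat m :: complex) = - of_nat (m - 1 - n)"
    using assms by (simp add: of_nat_diff)
  moreover have "m - 1 - n < m" using assms by simp
  ultimately show ?thesis by (auto simp: pochhammer_eq_0_iff)
qed

lemma key:
  fixes a b :: complex
  assumes mN: "m \<le> N"
    and hb: "pochhammer b N \<noteq> 0"
    and ha: "\<forall>n\<le>N. pochhammer (a + of_nat n) (N - n) \<noteq> 0"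
    and hba: "\<forall>n\<le>N. pochhammer (b - a + of_nat N - of_nat n) n \<noteq> 0"
  shows "pochhammer a N * pochhammer (b - a) N / (pochhammer b N * fact N) *
    (\<Sum>n=0..N. pochhammer (1 + of_nat n) (N - n) / pochhammer (a + of_nat n) (N - n)
       * (pochhammer (1 + of_nat N - of_nat n) n / pochhammer (b - a + of_nat N - of_nat n) n)
       * pochhammer (of_nat n + 1 - of_nat m) m)
    = pochhammer a m / pochhammer b m * pochhammer (of_nat N + 1 - of_nat m) m"
proof -
  define M where "M = N - m"
  define C where "C = pochhammer a N * pochhammer (b - a) N / (pochhammer b N * fact N)"
  define h where "h n = (if m \<le> n then pochhammer a m * pochhammer (a + of_nat m) (n - m)
      * pochhammer (b - a) (N - n) * fact N / (fact (n - m) * fact (N - n) * pochhammer b N) else 0)" for n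
  have step: "C * (pochhammer (1 + of_nat n) (N - n) / pochhammer (a + of_nat n) (N - n)
       * (pochhammer (1 + of_nat N - of_nat n) n / pochhammer (b - a + of_nat N - of_nat n) n)
       * pochhammer (of_nat n + 1 - of_nat m) m) = h n" if nN: "n \<le> N" for n
  proof (cases "m \<le> n")
    case False
    then show ?thesis by (simp add: h_def poch_zero)
  next
    case True
    have e1: "pochhammer (1 + of_nat n) (N - n) = (fact N / fact n :: complex)"
      using poch_nat[of "N - n" N] nN by (simp add: of_nat_diff add.commute)
    have e2: "pochhammer (1 + of_nat N - of_nat n) n = (fact N / fact (N - n) :: complex)"
      using poch_nat[of n N] nN by (simp add: add.commute)
    have e3: "pochhammer (of_nat n + 1 - of_nat m) m = (fact n / fact (n - m) :: complex)"
      using poch_nat[of m n] True by simp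
    have e4: "pochhammer a N = pochhammer a n * pochhammer (a + of_nat n) (N - n)"
      by (rule pochhammer_product[OF nN])
    have e5: "pochhammer a n = pochhammer a m * pochhammer (a + of_nat m) (n - m)"
      by (rule pochhammer_product[OF True])
    have e6: "pochhammer (b - a) N = pochhammer (b - a) (N - n) * pochhammer (b - a + of_nat N - of_nat n) n"
      using pochhammer_product[of "N - n" N "b - a"] nN by (simp add: of_nat_diff algebra_simps)
    have n1: "pochhammer (a + of_nat n) (N - n) \<noteq> 0" using ha nN by simp
    have n2: "pochhammer (b - a + of_nat N - of_nat n) n \<noteq> 0" using hba nN by simp
    show ?thesis
      unfolding h_def C_def e1 e2 e3 e4 e5 e6 using True n1 n2 hb
      by (simp add: field_simps)
  qed
  have "C * (\<Sum>n=0..N. pochhammer (1 + of_nat n) (N - n) / pochhammer (a + of_nat n) (N - n)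
       * (pochhammer (1 + of_nat N - of_nat n) n / pochhammer (b - a + of_nat N - of_nat n) n)
       * pochhammer (of_nat n + 1 - of_nat m) m) = (\<Sum>n=0..N. h n)"
    unfolding sum_distrib_left by (rule sum.cong[OF refl], rule step) simp
  also have "\<dots> = (\<Sum>n=m..N. h n)"
    by (rule sum.mono_neutral_right) (auto simp: h_def)
  also have "\<dots> = (\<Sum>k=0..M. h (k + m))"
    unfolding M_def using mN by (subst sum.shift_bounds_cl_nat_ivl[symmetric]) simp
  also have "\<dots> = (\<Sum>k=0..M. pochhammer a m * fact N / (fact M * pochhammer b N) *
        (of_nat (M choose k) * pochhammer (a + of_nat m) k * pochhammer (b - a) (M - k)))"
  proof (rule sum.cong)
    fix k assume k: "k \<in> {0..M}"
    have "N - (k + m) = M - k" using k by (simp add: M_def)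
    then show "h (k + m) = pochhammer a m * fact N / (fact M * pochhammer b N) *
        (of_nat (M choose k) * pochhammer (a + of_nat m) k * pochhammer (b - a) (M - k))"
      using k hb by (simp add: h_def binomial_fact field_simps)
  qed simp
  also have "\<dots> = pochhammer a m * fact N / (fact M * pochhammer b N) * pochhammer (b + of_nat m) M"
  proof -
    have "pochhammer (b + of_nat m) M = (\<Sum>k=0..M. of_nat (M choose k) * pochhammer (a + of_nat m) k * pochhammer (b - a) (M - k))"
      using pochhammer_binomial_sum[of "a + of_nat m" "b - a" M] by (simp add: atLeast0AtMost add.commute)
    then show ?thesis by (simp only: sum_distrib_left)
  qed
  also have "pochhammer b N = pochhammer b m * pochhammer (b + of_nat m) M"
    unfolding M_def by (rule pochhammer_product[OF mN])
  also have "pochhammer a m * fact N / (fact M * (pochhammer b m * pochhammer (b + of_nat m) M)) * pochhammer (b + of_nat m) M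
     = pochhammer a m / pochhammer b m * pochhammer (of_nat N + 1 - of_nat m) m"
    using hb \<open>pochhammer b N = _\<close> poch_nat[OF mN] unfolding M_def by (simp add: field_simps)
  finally show ?thesis unfolding C_def .
qed


lemma inner:
  assumes "n \<le> N" and z: "z \<noteq> 0"
  shows "trunc_hyp as bs n (of_nat n / of_nat N * z) =
    (\<Sum>m=0..N. (\<Prod>a\<leftarrow>as. pochhammer a m) / ((\<Prod>b\<leftarrow>bs. pochhammer b m) * fact m)
        * (pochhammer (of_nat n + 1 - of_nat m) m
           / pochhammer (of_nat N * inverse z - of_nat m) m))"
proof -
  have "trunc_hyp as bs n (of_nat n / of_nat N * z) =
    (\<Sum>m=0..n. (\<Prod>a\<leftarrow>as. pochhammer a m) / ((\<Prod>b\<leftarrow>bs. pochhammer b m) * fact m)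
        * (pochhammer (of_nat n + 1 - of_nat m) m
           / pochhammer (of_nat N * inverse z - of_nat m) m))"
    unfolding trunc_hyp_def
  proof (rule sum.cong[OF refl])
    fix m assume m: "m \<in> {0..n}"
    show "(\<Prod>a\<leftarrow>as. pochhammer a m) / ((\<Prod>b\<leftarrow>bs. pochhammer b m) * fact m)
        * (pochhammer (of_nat n + 1 - of_nat m) m
           / pochhammer (of_nat n * inverse (of_nat n / of_nat N * z) - of_nat m) m) =
        (\<Prod>a\<leftarrow>as. pochhammer a m) / ((\<Prod>b\<leftarrow>bs. pochhammer b m) * fact m)
        * (pochhammer (of_nat n + 1 - of_nat m) m
           / pochhammer (of_nat N * inverse z - of_nat m) m)"
    proof (cases "n = 0")
      case True then show ?thesis using m by simp
    next
      case False
      then have "N \<noteq> 0" using assms by simp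
      then have "(of_nat n * inverse (of_nat n / of_nat N * z) :: complex) = of_nat N * inverse z"
        using False z by (simp add: field_simps)
      then show ?thesis by simp
    qed
  qed
  also have "\<dots> = (\<Sum>m=0..N. (\<Prod>a\<leftarrow>as. pochhammer a m) / ((\<Prod>b\<leftarrow>bs. pochhammer b m) * fact m)
        * (pochhammer (of_nat n + 1 - of_nat m) m
           / pochhammer (of_nat N * inverse z - of_nat m) m))"
    by (rule sum.mono_neutral_left) (use assms in \<open>auto simp: poch_zero\<close>)
  finally show ?thesis .
qed

theorem theorem3p3:
  fixes N :: nat and a b z :: complex and as bs :: "complex list"
  assumes "z \<noteq> 0"
    and "\<forall>m\<le>N. pochhammer b m \<noteq> 0"
    and "\<forall>m\<le>N. \<forall>c\<in>set bs. pochhammer c m \<noteq> 0"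
    and "\<forall>m\<le>N. pochhammer (of_nat N * inverse z - of_nat m) m \<noteq> 0"
    and "\<forall>n\<le>N. pochhammer (a + of_nat n) (N - n) \<noteq> 0"
    and "\<forall>n\<le>N. pochhammer (b - a + of_nat N - of_nat n) n \<noteq> 0"
  shows "trunc_hyp (a # as) (b # bs) N z =
    pochhammer a N * pochhammer (b - a) N / (pochhammer b N * fact N) *
    (\<Sum>n=0..N. pochhammer (1 + of_nat n) (N - n) / pochhammer (a + of_nat n) (N - n)
       * (pochhammer (1 + of_nat N - of_nat n) n / pochhammer (b - a + of_nat N - of_nat n) n)
       * trunc_hyp as bs n (of_nat n / of_nat N * z))"
proof -
  define C where "C = pochhammer a N * pochhammer (b - a) N / (pochhammer b N * fact N)"
  define w where "w n = pochhammer (1 + of_nat n) (N - n) / pochhammer (a + of_nat n) (N - n)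
       * (pochhammer (1 + of_nat N - of_nat n) n / pochhammer (b - a + of_nat N - of_nat n) n)" for n
  define c where "c m = (\<Prod>a\<leftarrow>as. pochhammer a m) / ((\<Prod>b\<leftarrow>bs. pochhammer b m) * fact m)
       / pochhammer (of_nat N * inverse z - of_nat m) m" for m
  have I: "trunc_hyp as bs n (of_nat n / of_nat N * z) = (\<Sum>m=0..N. c m * pochhammer (of_nat n + 1 - of_nat m) m)"
    if "n \<le> N" for n
    unfolding inner[OF that assms(1)] c_def by (rule sum.cong) auto
  have "C * (\<Sum>n=0..N. w n * trunc_hyp as bs n (of_nat n / of_nat N * z))
      = C * (\<Sum>n=0..N. w n * (\<Sum>m=0..N. c m * pochhammer (of_nat n + 1 - of_nat m) m))"
    by (rule arg_cong[where f="\<lambda>x. C * x"], rule sum.cong[OF refl], subst I, auto)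
  also have "\<dots> = (\<Sum>m=0..N. c m * (C * (\<Sum>n=0..N. w n * pochhammer (of_nat n + 1 - of_nat m) m)))"
  proof -
    have "C * (\<Sum>n=0..N. w n * (\<Sum>m=0..N. c m * pochhammer (of_nat n + 1 - of_nat m) m))
       = (\<Sum>n=0..N. \<Sum>m=0..N. c m * (C * (w n * pochhammer (of_nat n + 1 - of_nat m) m)))"
      by (simp only: sum_distrib_left mult.left_commute)
    also have "\<dots> = (\<Sum>m=0..N. \<Sum>n=0..N. c m * (C * (w n * pochhammer (of_nat n + 1 - of_nat m) m)))"
      by (rule sum.swap)
    also have "\<dots> = (\<Sum>m=0..N. c m * (C * (\<Sum>n=0..N. w n * pochhammer (of_nat n + 1 - of_nat m) m)))"
      by (simp only: sum_distrib_left)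
    finally show ?thesis .
  qed
  also have "\<dots> = (\<Sum>m=0..N. c m * (pochhammer a m / pochhammer b m * pochhammer (of_nat N + 1 - of_nat m) m))"
  proof (rule sum.cong[OF refl])
    fix m assume m: "m \<in> {0..N}"
    show "c m * (C * (\<Sum>n=0..N. w n * pochhammer (of_nat n + 1 - of_nat m) m)) =
      c m * (pochhammer a m / pochhammer b m * pochhammer (of_nat N + 1 - of_nat m) m)"
      using key[of m N b a] m assms unfolding C_def w_def by simp
  qed
  also have "\<dots> = trunc_hyp (a # as) (b # bs) N z"
    unfolding trunc_hyp_def c_def by (rule sum.cong) (auto simp: mult_ac)
  finally show ?thesis unfolding C_def w_def by simp
qed

end
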